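(* Let $n\ge1$, $h>0$, $\lambda>0$, and let $f:\mathbb{R}^n\to\mathbb{R}$ be Lipschitz with Lipschitz constant $L$. Then for every grid point $x_k\in h\mathbb{Z}^n$, $$\big|M^h_\lambda(f)(x_k)-M_\lambda(f)(x_k)\big|\le(2+\sqrt n)Lh+2\lambda h^2 n.$$
   Context: $M_\lambda(f)(x)=\inf_{y\in\mathbb{R}^n}\{f(y)+\lambda|y-x|^2\}$ is the lower Moreau envelope, and the discrete lower Moreau envelope at a grid point $x_k$ of the grid of size $h$ is $M^h_\lambda(f)(x_k)=\inf\{f(x_k+rh)+\lambda h^2|r|^2:\ r\in\mathbb{Z}^n\}$. Here $|\cdot|$ is the Euclidean norm. *)

theory Defs
  imports "HOL-Analysis.Analysis"
begin

definition moreau_env :: "real \<Rightarrow> (real^'n \<Rightarrow> real) \<Rightarrow> real^'n \<Rightarrow> real" where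
  "moreau_env lam f x = (INF y. f y + lam * (norm (y - x))^2)"

definition int_vec :: "(real^'n) set" where
  "int_vec = {r. \<forall>i. r $ i \<in> \<int>}"

definition disc_moreau_env :: "real \<Rightarrow> real \<Rightarrow> (real^'n \<Rightarrow> real) \<Rightarrow> real^'n \<Rightarrow> real" where
  "disc_moreau_env h lam f x = (INF r\<in>int_vec. f (x + h *\<^sub>R r) + lam * h^2 * (norm r)^2)"

end

theory Submission
  imports Defs
begin

lemma norm_const_vec: "norm (\<chi> i::'n::finite. (c::real)) = sqrt (real CARD('n)) * \<bar>c\<bar>"
  unfolding norm_vec_def by (simp add: L2_set_constant)

lemma trunc_lemma:
  fixes a :: real
  shows "\<bar>(if a \<ge> 0 then of_int \<lfloor>a\<rfloor> else of_int \<lceil>a\<rceil>)\<bar> \<le> \<bar>a\<bar> \<and>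
         \<bar>(if a \<ge> 0 then of_int \<lfloor>a\<rfloor> else of_int \<lceil>a\<rceil>) - a\<bar> \<le> (1::real)"
proof (cases "a \<ge> 0")
  case True
  have "of_int \<lfloor>a\<rfloor> \<le> a" "a < of_int \<lfloor>a\<rfloor> + 1" "(0::real) \<le> of_int \<lfloor>a\<rfloor>"
    using True by (simp_all only: of_int_floor_le real_of_int_floor_add_one_gt) simp
  then show ?thesis
    apply (simp only: if_P[OF True] abs_of_nonneg[OF True] abs_le_iff)
    apply (intro conjI TrueI)
    by linarith+
next
  case False
  have "a \<le> of_int \<lceil>a\<rceil>" "of_int \<lceil>a\<rceil> - 1 < a" "of_int \<lceil>a\<rceil> \<le> (0::real)"
    using False ceiling_correct[of a] by auto
  then show ?thesis using False by auto
qed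

theorem corollary4p4:
  fixes f :: "real^'n \<Rightarrow> real" and h lam L :: real and xk :: "real^'n"
  assumes "h > 0" and "lam > 0"
    and "L-lipschitz_on UNIV f"
    and "xk \<in> (\<lambda>r. h *\<^sub>R r) ` int_vec"
  shows "\<bar>disc_moreau_env h lam f xk - moreau_env lam f xk\<bar>
           \<le> (2 + sqrt (real CARD('n))) * L * h + 2 * lam * h^2 * real CARD('n)"
proof -
  have hp: "h > 0" and lp: "lam > 0" using assms by auto
  have L0: "L \<ge> 0" using assms(3) by (simp add: lipschitz_on_def)
  have lip: "dist (f x) (f y) \<le> L * dist x y" for x y
    using lipschitz_onD[OF assms(3)] by simp
  define g where "g y = f y + lam * (norm (y - xk))^2" for y
  define B where "B = f xk - L^2 / (4*lam)"
  have lower: "B \<le> g y" for y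
  proof -
    define t where "t = norm (y - xk)"
    have "f xk - f y \<le> L * t" using lip[of xk y] unfolding t_def dist_norm
      by (simp add: norm_minus_commute) 
    moreover have "lam * t^2 - L * t + L^2/(4*lam) \<ge> 0"
    proof -
      have "lam * t^2 - L * t + L^2/(4*lam) = lam * (t - L/(2*lam))^2"
        using lp by (simp add: field_simps power2_eq_square)
      thus ?thesis using lp by simp
    qed
    ultimately show ?thesis unfolding g_def B_def t_def by linarith
  qed
  have bddC: "bdd_below (range g)" by (rule bdd_belowI2[where m=B]) (rule lower)
  define G where "G r = f (xk + h *\<^sub>R r) + lam * h^2 * (norm r)^2" for r
  have Gg: "G r = g (xk + h *\<^sub>R r)" for r
    unfolding G_def g_def using hp by (simp add: power_mult_distrib)
  have bddD: "bdd_below (G ` int_vec)" by (rule bdd_belowI2[where m=B]) (simp add: Gg lower)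
  have C: "moreau_env lam f xk = (INF y. g y)" unfolding moreau_env_def g_def by simp
  have D: "disc_moreau_env h lam f xk = (INF r\<in>int_vec. G r)"
    unfolding disc_moreau_env_def G_def by simp
  have ne: "(int_vec :: (real^'n) set) \<noteq> {}"
  proof -
    have "(0::real^'n) \<in> int_vec" unfolding int_vec_def by simp
    thus ?thesis by (metis empty_iff)
  qed
  have CD: "(INF y. g y) \<le> (INF r\<in>int_vec. G r)"
    by (rule cINF_greatest[OF ne]) (unfold Gg, rule cINF_lower[OF bddC], simp)
  define s where "s = sqrt (real CARD('n)) * L * h"
  have DC: "(INF r\<in>int_vec. G r) - s \<le> (INF y. g y)"
  proof (rule cINF_greatest)
    show "UNIV \<noteq> {}" by simp
  next
    fix y
    define d where "d = y - xk"
    define r :: "real^'n" where "r = (\<chi> i. if d$i / h \<ge> 0 then of_int \<lfloor>d$i / h\<rfloor> else of_int \<lceil>d$i / h\<rceil>)"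
    have rint: "r \<in> int_vec" unfolding int_vec_def r_def by auto
    have comp: "\<bar>h * r$i\<bar> \<le> \<bar>d$i\<bar> \<and> \<bar>h * r$i - d$i\<bar> \<le> h" for i
    proof -
      let ?a = "d$i / h"
      have di: "d$i = h * ?a" using hp by simp
      have "\<bar>r$i\<bar> \<le> \<bar>?a\<bar> \<and> \<bar>r$i - ?a\<bar> \<le> 1"
        unfolding r_def using trunc_lemma[of ?a] by simp
      then have "h * \<bar>r$i\<bar> \<le> h * \<bar>?a\<bar> \<and> h * \<bar>r$i - ?a\<bar> \<le> h * 1"
        using hp by (meson mult_left_mono less_imp_le)
      moreover have "\<bar>h * r$i - d$i\<bar> = h * \<bar>r$i - ?a\<bar>"
      proof -
        have "h * r$i - d$i = h * (r$i - ?a)" using hp by (simp add: field_simps)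
        thus ?thesis using hp by (simp add: abs_mult)
      qed
      ultimately show ?thesis using hp by (subst di, simp add: abs_mult)
    qed
    have n1: "norm (h *\<^sub>R r) \<le> norm d"
      by (rule norm_le_componentwise_cart) (use comp in simp)
    have n2: "norm (h *\<^sub>R r - d) \<le> norm (\<chi> i::'n. h)"
      by (rule norm_le_componentwise_cart) (use comp hp in simp)
    hence n2': "norm (xk + h *\<^sub>R r - y) \<le> sqrt (real CARD('n)) * h"
      using hp by (simp add: norm_const_vec d_def algebra_simps)
    have "f (xk + h *\<^sub>R r) \<le> f y + L * norm (xk + h *\<^sub>R r - y)"
      using lip[of "xk + h *\<^sub>R r" y] by (simp add: dist_norm)
    also have "\<dots> \<le> f y + s" unfolding s_def
      using mult_left_mono[OF n2' L0] by (simp add: mult_ac)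
    finally have f1: "f (xk + h *\<^sub>R r) \<le> f y + s" .
    have "(norm (h *\<^sub>R r))^2 \<le> (norm d)^2" using n1 by (simp add: power_mono)
    hence "lam * (norm (h *\<^sub>R r))^2 \<le> lam * (norm d)^2" using lp by simp
    hence "G r \<le> g y + s" using f1 unfolding Gg g_def d_def by simp
    moreover have "(INF r\<in>int_vec. G r) \<le> G r" by (rule cINF_lower[OF bddD rint])
    ultimately show "(INF r\<in>int_vec. G r) - s \<le> g y" by linarith
  qed
  have "0 \<le> 2 * L * h + 2 * lam * h^2 * real CARD('n)" using L0 hp lp by simp
  thus ?thesis using CD DC unfolding C D s_def by (simp add: algebra_simps abs_le_iff)
qed

end
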